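(* Assume the setting below with $Y_i(0)=0$ for all $i=1,\dots,N$. Fix $1\le k\le N$ and $c\in\mathbb{R}$, and define $$p^{\mathrm H}_{k,c} \equiv G_{\mathrm H}\big(n(c);\,N,\,N-k,\,N_1\big).$$ Then $p^{\mathrm H}_{k,c}$ is a valid $p$-value for testing the null hypothesis $H_{k,c}:\ \tau_{(k)}\le c$. That is, whenever $H_{k,c}$ holds, $\Pr\big(p^{\mathrm H}_{k,c}\le\alpha\big)\le\alpha$ for every $\alpha\in(0,1)$. Here the probability is over the random assignment $Z$.
   Context: Setting: - There are $N$ units. Each unit $i$ has fixed (non-random) potential outcomes $Y_i(1),Y_i(0)\in\mathbb{R}$ and individual treatment effect (ITE) $\tau_i=Y_i(1)-Y_i(0)$. - The sorted ITEs are $\tau_{(1)}\le\tau_{(2)}\le\dots\le\tau_{(N)}$. - Completely randomized experiment (CRE): for a fixed $1\le N_1<N$, the assignment vector $Z=(Z_1,\dots,Z_N)\in\{0,1\}^N$ is uniformly distributed over all vectors with exactly $N_1$ ones. Unit $i$ is treated if $Z_i=1$. - The observed outcome is $Y_i=Z_iY_i(1)+(1-Z_i)Y_i(0)$. - For $c\in\mathbb{R}$, let $N(c)=\sum_{i=1}^N\mathbb{1}(\tau_i>c)$ and $n(c)=\sum_{i=1}^N Z_i\mathbb{1}(Y_i>c)$. - The null hypothesis $H_{k,c}$ is $\tau_{(k)}\le c$, which is equivalent to $N(c)\le N-k$. - $G_{\mathrm H}(x;N,n,N_1)=\Pr(X\ge x)$, where $X$ is Hypergeometric with parameters $(N,n,N_1)$: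 the number of marked items in a simple random sample of size $N_1$ drawn without replacement from a population of $N$ items, of which $n$ are marked. *)

theory Defs
  imports "HOL-Probability.Probability"
begin

text \<open>Units are indexed by 0..<N. An assignment Z is represented by its set of
treated units S = {i. Z_i = 1}.\<close>

definition ite :: "(nat \<Rightarrow> real) \<Rightarrow> (nat \<Rightarrow> real) \<Rightarrow> nat \<Rightarrow> real" where
  "ite Y1 Y0 i = Y1 i - Y0 i"

definition tau_ord :: "nat \<Rightarrow> (nat \<Rightarrow> real) \<Rightarrow> (nat \<Rightarrow> real) \<Rightarrow> nat \<Rightarrow> real" where
  "tau_ord N Y1 Y0 k = sort (map (ite Y1 Y0) [0..<N]) ! (k - 1)"

text \<open>Support of the CRE: all treated sets of size N1.\<close>
definition assignments :: "nat \<Rightarrow> nat \<Rightarrow> nat set set" where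
  "assignments N N1 = {S. S \<subseteq> {0..<N} \<and> card S = N1}"

definition observed :: "(nat \<Rightarrow> real) \<Rightarrow> (nat \<Rightarrow> real) \<Rightarrow> nat set \<Rightarrow> nat \<Rightarrow> real" where
  "observed Y1 Y0 S i = (if i \<in> S then Y1 i else Y0 i)"

definition nstat :: "nat \<Rightarrow> (nat \<Rightarrow> real) \<Rightarrow> (nat \<Rightarrow> real) \<Rightarrow> real \<Rightarrow> nat set \<Rightarrow> nat" where
  "nstat N Y1 Y0 c S = card {i \<in> {0..<N}. i \<in> S \<and> observed Y1 Y0 S i > c}"

text \<open>Hypergeometric upper tail: G_H(x; NN, n, N1) = Pr(X >= x), X ~ Hypergeometric(NN, n, N1).\<close>
definition G_H :: "nat \<Rightarrow> nat \<Rightarrow> nat \<Rightarrow> nat \<Rightarrow> real" where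
  "G_H x NN n N1 =
     (\<Sum>j\<in>{x..N1}. real (n choose j) * real ((NN - n) choose (N1 - j))) / real (NN choose N1)"

definition pH :: "nat \<Rightarrow> nat \<Rightarrow> nat \<Rightarrow> (nat \<Rightarrow> real) \<Rightarrow> (nat \<Rightarrow> real) \<Rightarrow> real \<Rightarrow> nat set \<Rightarrow> real" where
  "pH N N1 k Y1 Y0 c S = G_H (nstat N Y1 Y0 c S) N (N - k) N1"

end

theory Submission
  imports Defs
begin

lemma count_j:
  assumes fU: "finite U" and BU: "B \<subseteq> U" and jn: "j \<le> n"
  shows "card {S. S \<subseteq> U \<and> card S = n \<and> card (S \<inter> B) = j}
         = (card B choose j) * ((card U - card B) choose (n - j))"
proof -
  let ?L = "{S. S \<subseteq> U \<and> card S = n \<and> card (S \<inter> B) = j}"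
  let ?R = "{X. X \<subseteq> B \<and> card X = j} \<times> {Y. Y \<subseteq> U - B \<and> card Y = n - j}"
  let ?f = "\<lambda>S. (S \<inter> B, S - B)"
  have fB: "finite B" using fU BU finite_subset by blast
  have inj: "inj_on ?f ?L"
  proof (rule inj_onI)
    fix S T assume "?f S = ?f T"
    hence "S \<inter> B = T \<inter> B" "S - B = T - B" by auto
    thus "S = T" by blast
  qed
  have img: "?f ` ?L = ?R"
  proof
    show "?f ` ?L \<subseteq> ?R"
    proof (rule image_subsetI)
      fix S assume "S \<in> ?L"
      hence S: "S \<subseteq> U" "n = card S" "j = card (S \<inter> B)" by auto
      have fS: "finite S" using S fU finite_subset by blast
      have "card S = card (S \<inter> B) + card (S - B)"
        using fS by (metis card_Int_Diff)
      thus "(S \<inter> B, S - B) \<in> ?R" using S by auto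
    qed
    show "?R \<subseteq> ?f ` ?L"
    proof (rule subsetI)
      fix p assume "p \<in> ?R"
      then obtain X Y where p: "p = (X, Y)" and X: "X \<subseteq> B" "j = card X" "Y \<subseteq> U - B" "card Y = n - card X" by auto
      have fX: "finite X" using X fB finite_subset by blast
      have fY: "finite Y" using X fU finite_subset by blast
      have d: "X \<inter> Y = {}" using X by blast
      have c: "card (X \<union> Y) = n" using card_Un_disjoint[OF fX fY d] X jn by simp
      have e1: "(X \<union> Y) \<inter> B = X" using X by blast
      have e2: "(X \<union> Y) - B = Y" using X by blast
      have "X \<union> Y \<in> ?L" using c e1 X BU by auto
      moreover have "(X, Y) = ?f (X \<union> Y)" using e1 e2 by simp
      ultimately show "p \<in> ?f ` ?L" using p by blast
    qed
  qed
  have "card ?L = card ?R" using card_image[OF inj] img by simp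
  also have "\<dots> = (card B choose j) * (card (U - B) choose (n - j))"
    using n_subsets[OF fB] n_subsets[of "U - B"] fU by (simp add: card_cartesian_product)
  also have "card (U - B) = card U - card B" using card_Diff_subset[OF fB BU] .
  finally show ?thesis .
qed

lemma count_ge:
  assumes fU: "finite U" and BU: "B \<subseteq> U"
  shows "card {S. S \<subseteq> U \<and> card S = n \<and> x \<le> card (S \<inter> B)}
         = (\<Sum>j\<in>{x..n}. (card B choose j) * ((card U - card B) choose (n - j)))"
proof -
  have fB: "finite B" using fU BU finite_subset by blast
  have eq: "{S. S \<subseteq> U \<and> card S = n \<and> x \<le> card (S \<inter> B)}
     = (\<Union>j\<in>{x..n}. {S. S \<subseteq> U \<and> card S = n \<and> card (S \<inter> B) = j})"
  proof -
    have "card (S \<inter> B) \<le> card S" if "S \<subseteq> U" for S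
      using that fU finite_subset by (metis card_mono inf_le1)
    thus ?thesis by auto
  qed
  have "card {S. S \<subseteq> U \<and> card S = n \<and> x \<le> card (S \<inter> B)}
      = (\<Sum>j\<in>{x..n}. card {S. S \<subseteq> U \<and> card S = n \<and> card (S \<inter> B) = j})"
    unfolding eq
  proof (rule card_UN_disjoint)
    show "finite {x..n}" by simp
    show "\<forall>i\<in>{x..n}. finite {S. S \<subseteq> U \<and> card S = n \<and> card (S \<inter> B) = i}"
      using fU by auto
    show "\<forall>i\<in>{x..n}. \<forall>j\<in>{x..n}. i \<noteq> j \<longrightarrow>
      {S. S \<subseteq> U \<and> card S = n \<and> card (S \<inter> B) = i} \<inter>
      {S. S \<subseteq> U \<and> card S = n \<and> card (S \<inter> B) = j} = {}" by auto
  qed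
  also have "\<dots> = (\<Sum>j\<in>{x..n}. (card B choose j) * ((card U - card B) choose (n - j)))"
    by (rule sum.cong) (auto intro: count_j[OF fU BU])
  finally show ?thesis .
qed

lemma G_H_antitone:
  assumes "x \<le> y" shows "G_H y NN n N1 \<le> G_H x NN n N1"
  unfolding G_H_def
  by (rule divide_right_mono, rule sum_mono2) (use assms in auto)

theorem proposition1:
  fixes N N1 k :: nat and Y1 Y0 :: "nat \<Rightarrow> real" and c \<alpha> :: real
  assumes "1 \<le> N1" and "N1 < N"
    and "\<forall>i<N. Y0 i = 0"
    and "1 \<le> k" and "k \<le> N"
    and "tau_ord N Y1 Y0 k \<le> c"
    and "0 < \<alpha>" and "\<alpha> < 1"
  shows "measure_pmf.prob (pmf_of_set (assignments N N1))
           {S. pH N N1 k Y1 Y0 c S \<le> \<alpha>} \<le> \<alpha>"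
proof -
  define A where "A = {i. i < N \<and> Y1 i > c}"
  define L where "L = sort (map (ite Y1 Y0) [0..<N])"
  have lenL: "length L = N" unfolding L_def by simp
  have sL: "sorted L" unfolding L_def by simp
  have Lk: "L ! (k - 1) \<le> c" using assms(6) unfolding tau_ord_def L_def by simp
  have "length (filter (\<lambda>x. x > c) L) = length (filter (\<lambda>x. x > c) (map (ite Y1 Y0) [0..<N]))"
    unfolding L_def by (simp add: filter_sort)
  also have "\<dots> = card A"
    unfolding length_filter_conv_card A_def using assms(3)
    by (intro arg_cong[where f=card]) (auto simp: ite_def)
  finally have cA: "card A = card {i. i < N \<and> c < L ! i}"
    unfolding length_filter_conv_card lenL by simp
  have "{i. i < N \<and> c < L ! i} \<subseteq> {k..<N}"
  proof (rule subsetI)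
    fix i assume "i \<in> {i. i < N \<and> c < L ! i}"
    hence i: "i < N" "c < L ! i" by auto
    have "k \<le> i"
    proof (rule ccontr)
      assume "\<not> k \<le> i"
      hence "L ! i \<le> L ! (k - 1)" using sL lenL assms(5) by (intro sorted_nth_mono) auto
      thus False using i Lk by simp
    qed
    thus "i \<in> {k..<N}" using i by simp
  qed
  hence cAle: "card A \<le> N - k" unfolding cA by (metis card_atLeastLessThan card_mono finite_atLeastLessThan)
  have AU: "A \<subseteq> {0..<N}" unfolding A_def by auto
  obtain B where B: "A \<subseteq> B" "B \<subseteq> {0..<N}" "card B = N - k"
    using exists_subset_between[OF cAle _ AU] by auto
  define U where "U = {0..<N}"
  define G where "G = (\<lambda>x. G_H x N (N - k) N1)"
  define As where "As = assignments N N1"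
  have As_def2: "As = {S. S \<subseteq> U \<and> card S = N1}" unfolding As_def assignments_def U_def ..
  have fAs: "finite As" unfolding As_def2 U_def by auto
  have cAs: "card As = N choose N1" unfolding As_def2 U_def using n_subsets[of "{0..<N}"] by simp
  have neAs: "As \<noteq> {}" using cAs assms(2) by auto
  have nst: "nstat N Y1 Y0 c S = card (S \<inter> A)" for S
    unfolding nstat_def A_def observed_def by (rule arg_cong[where f=card]) auto
  have mono: "card (S \<inter> A) \<le> card (S \<inter> B)" if "S \<in> As" for S
    using B that unfolding As_def2 U_def
    by (intro card_mono) (auto intro: finite_subset)
  define E where "E = {S. pH N N1 k Y1 Y0 c S \<le> \<alpha>}"
  have prob: "measure_pmf.prob (pmf_of_set As) X = card (As \<inter> X) / card As" for X
    using measure_pmf_of_set[OF neAs fAs] by simp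
  show ?thesis
  proof (cases "As \<inter> E = {}")
    case True
    thus ?thesis using prob[of E] assms(7) unfolding As_def E_def by simp
  next
    case False
    define x0 where "x0 = (LEAST x. \<exists>S\<in>As \<inter> E. card (S \<inter> B) = x)"
    obtain S0 where S0: "S0 \<in> As \<inter> E" using False by blast
    have ex: "\<exists>S\<in>As \<inter> E. card (S \<inter> B) = x0"
      unfolding x0_def by (rule LeastI_ex) (use S0 in blast)
    have x0min: "x0 \<le> card (S \<inter> B)" if "S \<in> As \<inter> E" for S
      unfolding x0_def by (rule Least_le) (use that in blast)
    have Gx0: "G x0 \<le> \<alpha>"
    proof -
      obtain S where S: "S \<in> As \<inter> E" "card (S \<inter> B) = x0" using ex by blast
      have "G (card (S \<inter> B)) \<le> G (card (S \<inter> A))"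
        unfolding G_def using mono S by (intro G_H_antitone) auto
      also have "\<dots> \<le> \<alpha>" using S unfolding E_def pH_def G_def nst by simp
      finally show ?thesis using S by simp
    qed
    have sub: "As \<inter> E \<subseteq> {S. S \<subseteq> U \<and> card S = N1 \<and> x0 \<le> card (S \<inter> B)}"
      using x0min unfolding As_def2 by auto
    have "card (As \<inter> E) \<le> card {S. S \<subseteq> U \<and> card S = N1 \<and> x0 \<le> card (S \<inter> B)}"
      by (rule card_mono[OF _ sub]) (auto simp: U_def)
    also have "\<dots> = (\<Sum>j\<in>{x0..N1}. (card B choose j) * ((card U - card B) choose (N1 - j)))"
      using count_ge[of U B N1 x0] B unfolding U_def by simp
    finally have "real (card (As \<inter> E)) \<le> real (\<Sum>j\<in>{x0..N1}. (card B choose j) * ((card U - card B) choose (N1 - j)))"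
      by linarith
    hence "card (As \<inter> E) / card As \<le> G x0"
      unfolding G_def G_H_def cAs B(3) U_def
      by (simp add: divide_right_mono)
    thus ?thesis using Gx0 prob[of E] unfolding As_def E_def by simp
  qed
qed

end
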